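(* For each $j\in\mathbb{Z}_{\geq0}$ let $(t_{j,n})_{n\ge1}$ be a sequence of nonnegative reals, and define $(s_{j,n})_{n\ge1}$ recursively by $s_{j,1}=t_{j,1}$ and $s_{j,n}=\sum_{i=0}^{j}s_{i,n-1}t_{j-i,n}$ for $n\ge2$. Suppose that for every $j\in\mathbb{Z}_{\ge0}$, \[ t_{j,n}=\frac{1}{j!\,n^j}\left(1-\frac1n\right)+O\!\left(\frac{1}{n^{j+2}}\right)\quad(n\to\infty). \] Then for every $j\in\mathbb{Z}_{\ge0}$, $s_{j,n}=O\!\left(n^{-1/(j+1)}\right)$ as $n\to\infty$.
   Context: Implied constants in $O(\cdot)$ may depend on $j$. *)

theory Defs
  imports "HOL-Analysis.Analysis" "HOL-Library.Landau_Symbols"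
begin

text \<open>The sequence s_{j,n} built from t_{j,n} (indices n >= 1; the value at n = 0 is an
  irrelevant convention set to 0).\<close>
fun sseq :: "(nat \<Rightarrow> nat \<Rightarrow> real) \<Rightarrow> nat \<Rightarrow> nat \<Rightarrow> real" where
  "sseq t j 0 = 0"
| "sseq t j (Suc 0) = t j 1"
| "sseq t j (Suc (Suc m)) = (\<Sum>i\<le>j. sseq t i (Suc m) * t (j - i) (Suc (Suc m)))"

end

theory Submission
  imports Defs
begin

lemma powr_step:
  fixes p :: real and n :: nat
  assumes "0 < p" "p < 1" "n \<ge> 1"
  shows "p * real (Suc n) powr (p - 1) \<le> real (Suc n) powr p - real n powr p"
proof -
  have "\<exists>z::real. real n < z \<and> z < real (Suc n) \<and>
     (real (Suc n) powr p - real n powr p = (real (Suc n) - real n) * (p * z powr (p - 1)))"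
    by (rule MVT2) (use assms in \<open>auto intro!: has_real_derivative_powr\<close>)
  then obtain z where z: "real n < z" "z < real (Suc n)"
     "real (Suc n) powr p - real n powr p = p * z powr (p - 1)" by auto
  have "real (Suc n) powr (p - 1) \<le> z powr (p - 1)"
    using z assms by (intro powr_mono2') auto
  then show ?thesis using z assms by (simp add: mult_left_mono)
qed

lemma powr_sum_bound:
  fixes \<alpha> :: real
  assumes "0 < \<alpha>" "\<alpha> < 1"
  shows "(\<Sum>m=1..n. real m powr (-\<alpha>)) \<le> real n powr (1 - \<alpha>) / (1 - \<alpha>)"
proof (induction n)
  case 0 then show ?case by simp
next
  case (Suc n)
  show ?case
  proof (cases "n = 0")
    case True then show ?thesis using assms by (simp add: field_simps)
  next
    case False
    have st: "(1-\<alpha>) * real (Suc n) powr ((1-\<alpha>) - 1) \<le> real (Suc n) powr (1-\<alpha>) - real n powr (1-\<alpha>)"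
      using assms False by (intro powr_step) auto
    have "(\<Sum>m=1..Suc n. real m powr (-\<alpha>)) = (\<Sum>m=1..n. real m powr (-\<alpha>)) + real (Suc n) powr (-\<alpha>)"
      by simp
    also have "\<dots> \<le> real n powr (1 - \<alpha>) / (1 - \<alpha>) + real (Suc n) powr (-\<alpha>)"
      using Suc.IH by simp
    also have "\<dots> \<le> real (Suc n) powr (1 - \<alpha>) / (1 - \<alpha>)"
    proof -
      have "real (Suc n) powr (-\<alpha>) \<le> (real (Suc n) powr (1-\<alpha>) - real n powr (1-\<alpha>)) / (1-\<alpha>)"
        using st assms by (simp add: pos_le_divide_eq mult.commute)
      then show ?thesis by (simp add: diff_divide_distrib)
    qed
    finally show ?thesis .
  qed
qed

lemma rec_bound:
  fixes a :: "nat \<Rightarrow> real" and \<alpha> c E :: real and N :: nat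
  assumes "0 < \<alpha>" "\<alpha> \<le> 1" "c \<ge> 0" "E \<ge> 0" "N \<ge> 1"
    and nn: "\<And>m. m \<ge> N \<Longrightarrow> a m \<ge> 0"
    and rec: "\<And>m. m \<ge> N \<Longrightarrow> (real m + 1 + c) * a (Suc m) \<le> (real m + c) * a m + E * real m powr (-\<alpha>)"
    and E0: "\<alpha> = 1 \<Longrightarrow> E = 0"
  shows "\<exists>K. \<forall>n\<ge>N. a n \<le> K * real n powr (-\<alpha>)"
proof -
  define u where "u n = (real n + c) * a n" for n
  have U: "u n \<le> u N + E * (\<Sum>m\<in>{N..<n}. real m powr (-\<alpha>))" if "N \<le> n" for n
    using that
  proof (induction n rule: dec_induct)
    case base then show ?case by simp
  next
    case (step n)
    have "u (Suc n) \<le> u n + E * real n powr (-\<alpha>)"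
      using rec[of n] step by (simp add: u_def add.commute add.left_commute)
    then show ?case using step by (simp add: sum.atLeastLessThan_Suc algebra_simps)
  qed
  define K where "K = \<bar>u N\<bar> + E / (1 - \<alpha>)"
  have "a n \<le> K * real n powr (-\<alpha>)" if n: "n \<ge> N" for n
  proof -
    have npos: "real n \<ge> 1" using n assms by simp
    have S: "E * (\<Sum>m\<in>{N..<n}. real m powr (-\<alpha>)) \<le> E / (1 - \<alpha>) * real n powr (1 - \<alpha>)"
    proof (cases "\<alpha> = 1")
      case True then show ?thesis using E0 by simp
    next
      case False
      then have a1: "\<alpha> < 1" using assms by simp
      have "(\<Sum>m\<in>{N..<n}. real m powr (-\<alpha>)) \<le> (\<Sum>m=1..n. real m powr (-\<alpha>))"
        using assms by (intro sum_mono2) auto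
      also have "\<dots> \<le> real n powr (1 - \<alpha>) / (1 - \<alpha>)"
        using powr_sum_bound[OF assms(1) a1] .
      finally have "E * (\<Sum>m\<in>{N..<n}. real m powr (-\<alpha>)) \<le> E * (real n powr (1 - \<alpha>) / (1 - \<alpha>))"
        using assms by (intro mult_left_mono) auto
      then show ?thesis by simp
    qed
    have un: "(real n + c) * a n \<le> \<bar>u N\<bar> + E / (1 - \<alpha>) * real n powr (1 - \<alpha>)"
      using U[OF n] S unfolding u_def by linarith
    have "real n * a n \<le> (real n + c) * a n"
      using nn[OF n] assms by (simp add: mult_right_mono)
    also note un
    also have "\<bar>u N\<bar> \<le> \<bar>u N\<bar> * (real n * real n powr (-\<alpha>))"
    proof -
      have "real n powr (-1) \<le> real n powr (-\<alpha>)" using npos assms by (intro powr_mono) auto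
      then have "1 \<le> real n * real n powr (-\<alpha>)"
        using npos by (simp add: powr_minus field_simps)
      then show ?thesis using mult_left_mono[of 1 "real n * real n powr (-\<alpha>)" "\<bar>u N\<bar>"] by simp
    qed
    also have "real n powr (1 - \<alpha>) = real n * real n powr (-\<alpha>)"
      using npos by (simp add: powr_diff powr_minus field_simps)
    finally have "real n * a n \<le> real n * (K * real n powr (-\<alpha>))"
      unfolding K_def by (simp add: algebra_simps)
    then show ?thesis using npos by simp
  qed
  then show ?thesis by blast
qed

lemma sseq_nonneg:
  assumes "\<And>j n. n \<ge> 1 \<Longrightarrow> t j n \<ge> 0"
  shows "sseq t j n \<ge> 0"
proof -
  have "(\<forall>j n. n \<ge> 1 \<longrightarrow> t j n \<ge> 0) \<longrightarrow> sseq t j n \<ge> 0"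
    by (induction t j n rule: sseq.induct) (auto intro!: sum_nonneg mult_nonneg_nonneg)
  then show ?thesis using assms by blast
qed

lemma t0_bound:
  fixes t :: "nat \<Rightarrow> nat \<Rightarrow> real"
  assumes "(\<lambda>n. t 0 n - (1 / (fact 0 * real n ^ 0)) * (1 - 1 / real n)) \<in> O(\<lambda>n. 1 / real n ^ (0 + 2))"
  shows "\<exists>C N. C \<ge> 0 \<and> (\<forall>n\<ge>N. t 0 n \<le> 1 - 1 / real n + C / real n ^ 2)"
proof -
  from landau_o.bigE[OF assms] obtain c where c: "c > 0"
    "eventually (\<lambda>n. norm (t 0 n - (1 / (fact 0 * real n ^ 0)) * (1 - 1 / real n)) \<le> c * norm (1 / real n ^ (0 + 2))) at_top"
    by blast
  then obtain N where N: "\<And>n. n \<ge> N \<Longrightarrow> \<bar>t 0 n - (1 - 1 / real n)\<bar> \<le> c * (1 / real n ^ 2)"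
    by (auto simp: eventually_at_top_linorder power2_eq_square)
  have "\<forall>n\<ge>N. t 0 n \<le> 1 - 1 / real n + c / real n ^ 2"
  proof (intro allI impI)
    fix n assume "n \<ge> N"
    from N[OF this] show "t 0 n \<le> 1 - 1 / real n + c / real n ^ 2" by (simp add: abs_le_iff)
  qed
  then show ?thesis using c(1) by (intro exI[of _ c]) auto
qed

lemma tk_bound:
  fixes t :: "nat \<Rightarrow> nat \<Rightarrow> real"
  assumes "(\<lambda>n. t k n - (1 / (fact k * real n ^ k)) * (1 - 1 / real n)) \<in> O(\<lambda>n. 1 / real n ^ (k + 2))"
    and "k \<ge> 1"
  shows "\<exists>B N. B \<ge> 0 \<and> (\<forall>n\<ge>N. t k n \<le> B / real n)"
proof -
  from landau_o.bigE[OF assms(1)] obtain c where c: "c > 0"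
    "eventually (\<lambda>n. norm (t k n - (1 / (fact k * real n ^ k)) * (1 - 1 / real n)) \<le> c * norm (1 / real n ^ (k + 2))) at_top"
    by blast
  then obtain N where N: "\<And>n. n \<ge> N \<Longrightarrow> \<bar>t k n - (1 / (fact k * real n ^ k)) * (1 - 1 / real n)\<bar> \<le> c * \<bar>1 / real n ^ (k + 2)\<bar>"
    by (auto simp: eventually_at_top_linorder)
  have "\<forall>n\<ge>max N 1. t k n \<le> (1 + c) / real n"
  proof (intro allI impI)
    fix n assume n: "n \<ge> max N 1"
    then have n1: "real n \<ge> 1" by simp
    have pk: "real n \<le> real n ^ k" using n1 assms(2)
      by (metis power_one_right power_increasing)
    have pk2: "real n \<le> real n ^ (k + 2)" using n1
      by (metis le_add2 power_one_right power_increasing order_trans le_add1 assms(2))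
    have f1: "1 \<le> (fact k :: real)" by simp
    have A: "(1 / (fact k * real n ^ k)) * (1 - 1 / real n) \<le> 1 / real n"
    proof -
      have "(1 / (fact k * real n ^ k)) * (1 - 1 / real n) \<le> (1 / (fact k * real n ^ k)) * 1"
        using n1 by (intro mult_left_mono) auto
      also have "\<dots> \<le> 1 / real n"
      proof -
        have "real n \<le> fact k * real n ^ k"
          using pk f1 n1 by (metis mult_le_cancel_right1 order_trans mult.commute mult_le_cancel_left1 linorder_not_le not_one_le_zero order.strict_trans1 zero_less_one mult_right_mono fact_ge_1 of_nat_0_le_iff zero_le_power)
        then show ?thesis using n1 by (simp add: frac_le)
      qed
      finally show ?thesis .
    qed
    have B: "c * \<bar>1 / real n ^ (k + 2)\<bar> \<le> c / real n"
    proof -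
      have "1 / real n ^ (k + 2) \<le> 1 / real n" using pk2 n1 by (simp add: frac_le)
      then show ?thesis using c(1) n1 by (simp add: mult_left_mono divide_inverse)
    qed
    from N[of n] n have "t k n \<le> (1 / (fact k * real n ^ k)) * (1 - 1 / real n) + c * \<bar>1 / real n ^ (k + 2)\<bar>"
      by (simp add: abs_le_iff)
    also have "\<dots> \<le> 1 / real n + c / real n" using A B by linarith
    finally show "t k n \<le> (1 + c) / real n" by (simp add: add_divide_distrib)
  qed
  then show ?thesis using c(1) by (intro exI[of _ "1 + c"] exI[of _ "max N 1"]) auto
qed

lemma t0_arith:
  fixes x C \<tau> :: real
  assumes "x \<ge> 1" "C \<ge> 0" "x \<ge> 2 * C" "0 \<le> \<tau>" "\<tau> \<le> 1 - 1 / x + C / x ^ 2"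
  shows "(x + 2 * C) * \<tau> \<le> x - 1 + 2 * C"
proof -
  have x0: "x > 0" using assms by simp
  have "(x + 2 * C) * \<tau> \<le> (x + 2 * C) * (1 - 1 / x + C / x ^ 2)"
    using assms by (intro mult_left_mono) auto
  also have "\<dots> = (x + 2 * C) * (x^2 - x + C) / x^2"
    using x0 by (simp add: field_simps power2_eq_square)
  also have "\<dots> \<le> x - 1 + 2 * C"
  proof -
    have "(x + 2 * C) * (x^2 - x + C) \<le> (x - 1 + 2 * C) * x^2"
    proof -
      have "(x - 1 + 2 * C) * x^2 - (x + 2 * C) * (x^2 - x + C) = C * (x - 2 * C)"
        by (simp add: algebra_simps power2_eq_square)
      moreover have "C * (x - 2 * C) \<ge> 0" using assms by simp
      ultimately show ?thesis by linarith
    qed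
    then show ?thesis using x0 by (simp add: pos_divide_le_eq)
  qed
  finally show ?thesis .
qed

theorem mainTheorem10:
  fixes t :: "nat \<Rightarrow> nat \<Rightarrow> real"
  assumes nonneg: "\<And>j n. n \<ge> 1 \<Longrightarrow> t j n \<ge> 0"
    and asym: "\<And>j. (\<lambda>n. t j n - (1 / (fact j * real n ^ j)) * (1 - 1 / real n))
                 \<in> O(\<lambda>n. 1 / real n ^ (j + 2))"
  shows "\<And>j. (\<lambda>n. sseq t j n) \<in> O(\<lambda>n. real n powr (- 1 / real (j + 1)))"
proof -
  have nn: "\<And>j n. sseq t j n \<ge> 0" using sseq_nonneg nonneg by blast
  obtain C N0 where C: "C \<ge> 0" "\<forall>n\<ge>N0. t 0 n \<le> 1 - 1 / real n + C / real n ^ 2"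
    using t0_bound[of t, OF asym[of 0]] by blast
  have "\<forall>k. \<exists>B N. k \<ge> 1 \<longrightarrow> (B \<ge> 0 \<and> (\<forall>n\<ge>N. t k n \<le> B / real n))"
    using tk_bound[of t, OF asym] by blast
  then obtain B Nt where BN: "\<And>k. k \<ge> 1 \<Longrightarrow> B k \<ge> 0 \<and> (\<forall>n\<ge>Nt k. t k n \<le> B k / real n)"
    by metis
  have main: "\<exists>K N. \<forall>n\<ge>N. sseq t j n \<le> K * real n powr (- 1 / real (j + 1))" for j
  proof (induction j rule: less_induct)
    case (less j)
    have "\<forall>i. \<exists>K N. i < j \<longrightarrow> (\<forall>n\<ge>N. sseq t i n \<le> K * real n powr (- 1 / real (i + 1)))"
      using less by blast
    then obtain Kf Nf where KN: "\<And>i n. i < j \<Longrightarrow> n \<ge> Nf i \<Longrightarrow> sseq t i n \<le> Kf i * real n powr (- 1 / real (i + 1))"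
      by metis
    define \<alpha> where "\<alpha> = 1 / real (j + 1)"
    define E0 where "E0 = (\<Sum>i<j. \<bar>Kf i\<bar> * B (j - i))"
    define N where "N = max 1 (max N0 (max (nat \<lceil>2 * C\<rceil>) (max (\<Sum>i<j. Nf i) (\<Sum>k\<le>j. Nt k))))"
    have N1: "N \<ge> 1" unfolding N_def by simp
    have \<alpha>pos: "0 < \<alpha>" "\<alpha> \<le> 1" unfolding \<alpha>_def by auto
    have E0nn: "E0 \<ge> 0" unfolding E0_def using BN by (intro sum_nonneg mult_nonneg_nonneg) auto
    have rec: "(real m + 1 + 2 * C) * sseq t j (Suc m) \<le> (real m + 2 * C) * sseq t j m + ((1 + 2 * C) * E0) * real m powr (-\<alpha>)"
      if m: "m \<ge> N" for m
    proof -
      have m1: "m \<ge> 1" "real m \<ge> 1" using m unfolding N_def by auto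
      have mN0: "Suc m \<ge> N0" using m unfolding N_def by auto
      have mC: "real (Suc m) \<ge> 2 * C"
      proof -
        have "m \<ge> nat \<lceil>2 * C\<rceil>" using m unfolding N_def by auto
        then show ?thesis by linarith
      qed
      obtain m' where m': "m = Suc m'" using m1 by (cases m) auto
      have split: "sseq t j (Suc m) = (\<Sum>i<j. sseq t i m * t (j - i) (Suc m)) + sseq t j m * t 0 (Suc m)"
        unfolding m' by (simp add: lessThan_Suc_atMost[symmetric])
      have tm: "sseq t i m * t (j - i) (Suc m) \<le> (\<bar>Kf i\<bar> * B (j - i)) * (real m powr (-\<alpha>) / real (Suc m))"
        if i: "i < j" for i
      proof -
        have "Nf i \<le> (\<Sum>i<j. Nf i)" using i by (intro member_le_sum) auto
        then have mi: "m \<ge> Nf i" using m unfolding N_def by auto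
        have "Nt (j - i) \<le> (\<Sum>k\<le>j. Nt k)" by (intro member_le_sum) auto
        then have mt: "Suc m \<ge> Nt (j - i)" using m unfolding N_def by auto
        have ji: "j - i \<ge> 1" using i by simp
        have s1: "sseq t i m \<le> \<bar>Kf i\<bar> * real m powr (-\<alpha>)"
        proof -
          have "sseq t i m \<le> Kf i * real m powr (- 1 / real (i + 1))" using KN[OF i mi] .
          also have "\<dots> \<le> \<bar>Kf i\<bar> * real m powr (- 1 / real (i + 1))"
            by (intro mult_right_mono) auto
          also have "\<dots> \<le> \<bar>Kf i\<bar> * real m powr (-\<alpha>)"
          proof (intro mult_left_mono powr_mono)
            show "- 1 / real (i + 1) \<le> - \<alpha>" unfolding \<alpha>_def using i
              by (simp add: frac_le)
          qed (use m1 in auto)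
          finally show ?thesis .
        qed
        have t1: "t (j - i) (Suc m) \<le> B (j - i) / real (Suc m)" using BN[OF ji] mt by blast
        have "sseq t i m * t (j - i) (Suc m) \<le> (\<bar>Kf i\<bar> * real m powr (-\<alpha>)) * (B (j - i) / real (Suc m))"
          using s1 t1 nn nonneg[of "Suc m"] by (intro mult_mono) auto
        then show ?thesis by (simp add: algebra_simps)
      qed
      have F: "(\<Sum>i<j. sseq t i m * t (j - i) (Suc m)) \<le> E0 * (real m powr (-\<alpha>) / real (Suc m))"
        unfolding E0_def sum_distrib_right using tm by (intro sum_mono) auto
      have F2: "(real m + 1 + 2 * C) * (\<Sum>i<j. sseq t i m * t (j - i) (Suc m)) \<le> ((1 + 2 * C) * E0) * real m powr (-\<alpha>)"
      proof -
        have "(real m + 1 + 2 * C) * (\<Sum>i<j. sseq t i m * t (j - i) (Suc m))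
              \<le> (real m + 1 + 2 * C) * (E0 * (real m powr (-\<alpha>) / real (Suc m)))"
          using F C m1 by (intro mult_left_mono) auto
        also have "\<dots> = ((real m + 1 + 2 * C) / real (Suc m)) * (E0 * real m powr (-\<alpha>))"
          by (simp add: field_simps)
        also have "\<dots> \<le> (1 + 2 * C) * (E0 * real m powr (-\<alpha>))"
        proof (intro mult_right_mono)
          have "real m + 1 + 2 * C \<le> (1 + 2 * C) * real (Suc m)" using C m1
            by (simp add: algebra_simps)
          then show "(real m + 1 + 2 * C) / real (Suc m) \<le> 1 + 2 * C"
            by (simp add: pos_divide_le_eq)
        qed (use E0nn in auto)
        finally show ?thesis by (simp add: mult.assoc)
      qed
      have T0: "(real m + 1 + 2 * C) * (sseq t j m * t 0 (Suc m)) \<le> (real m + 2 * C) * sseq t j m"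
      proof -
        have "(real (Suc m) + 2 * C) * t 0 (Suc m) \<le> real (Suc m) - 1 + 2 * C"
          using C mN0 mC m1 nonneg[of "Suc m" 0] by (intro t0_arith) auto
        then have h: "(1 + real m + 2 * C) * t 0 (Suc m) \<le> real m + 2 * C" by simp
        have e: "real m + 1 + 2 * C = 1 + real m + 2 * C" by simp
        have "(real m + 1 + 2 * C) * t 0 (Suc m) \<le> real m + 2 * C" unfolding e by (rule h)
        then have "sseq t j m * ((real m + 1 + 2 * C) * t 0 (Suc m)) \<le> sseq t j m * (real m + 2 * C)"
          using nn by (intro mult_left_mono) auto
        then show ?thesis by (simp add: algebra_simps)
      qed
      have d: "(real m + 1 + 2 * C) * ((\<Sum>i<j. sseq t i m * t (j - i) (Suc m)) + sseq t j m * t 0 (Suc m))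
        = (real m + 1 + 2 * C) * (\<Sum>i<j. sseq t i m * t (j - i) (Suc m)) + (real m + 1 + 2 * C) * (sseq t j m * t 0 (Suc m))"
        by (rule distrib_left)
      show ?thesis unfolding split d using F2 T0 by linarith
    qed
    have E0z: "\<alpha> = 1 \<Longrightarrow> (1 + 2 * C) * E0 = 0" unfolding \<alpha>_def E0_def by simp
    have Enn: "0 \<le> (1 + 2 * C) * E0" using C(1) E0nn by simp
    have cnn: "0 \<le> 2 * C" using C(1) by simp
    have X: "\<exists>K. \<forall>n\<ge>N. sseq t j n \<le> K * real n powr (-\<alpha>)"
      by (rule rec_bound[of \<alpha> "2 * C" "(1 + 2 * C) * E0" N "sseq t j", OF \<alpha>pos(1) \<alpha>pos(2) cnn Enn N1 nn rec E0z])
    have eq: "- \<alpha> = - 1 / real (j + 1)" unfolding \<alpha>_def by simp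
    show ?case using X unfolding eq by blast
  qed
  fix j
  from main[of j] obtain K N where KN: "\<forall>n\<ge>N. sseq t j n \<le> K * real n powr (- 1 / real (j + 1))" by blast
  show "(\<lambda>n. sseq t j n) \<in> O(\<lambda>n. real n powr (- 1 / real (j + 1)))"
  proof (rule bigoI[where c = K])
    show "\<forall>\<^sub>F n in at_top. norm (sseq t j n) \<le> K * norm (real n powr (- 1 / real (j + 1)))"
      unfolding eventually_at_top_linorder using KN nn by (intro exI[of _ N]) auto
  qed
qed

end
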